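(* A map $\operatorname{z}\colon\operatorname{Conv}(\mathbb{R}^n;\mathbb{R})\to\mathbb{R}^n$ is a continuous, dually translation covariant, vertically translation invariant valuation that is homogeneous of degree $0$ if and only if there exists $t\in\mathbb{R}^n$ such that $\operatorname{z}(v)=t$ for every $v\in\operatorname{Conv}(\mathbb{R}^n;\mathbb{R})$. For $n\geq2$, such a $\operatorname{z}$ is in addition rotation equivariant if and only if $\operatorname{z}\equiv o$. For $n=1$, the same holds with rotation equivariance replaced by reflection equivariance ($\operatorname{z}(v(-\,\cdot))=-\operatorname{z}(v)$).
   Context: $\operatorname{Conv}(\mathbb{R}^n;\mathbb{R})$: convex functions $\mathbb{R}^n\to\mathbb{R}$ with the topology of pointwise convergence. Valuation: $\operatorname{z}(v\vee w)+\operatorname{z}(v\wedge w)=\operatorname{z}(v)+\operatorname{z}(w)$ whenever $v,w,v\vee w,v\wedge w$ are in the space. Dually translation covariant: there is $\operatorname{z}^0$ with $\operatorname{z}(v+\langle x,\cdot\rangle)=\operatorname{z}(v)+\operatorname{z}^0(v)x$. Vertically translation invariant: $\operatorname{z}(v+c)=\operatorname{z}(v)$ for $c\in\mathbb{R}$. Homogeneous of degree $s$: $\operatorname{z}(\lambda v)=\lambda^s\operatorname{z}(v)$ for $\lambda>0$. Rotation equivariant: $\operatorname{z}(v\circ\vartheta^{-1})=\vartheta\operatorname{z}(v)$ for $\vartheta\in\operatorname{SO}(n)$. $o$ denotes the origin. *)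

theory Defs
  imports "HOL-Analysis.Analysis"
begin

text \<open>Conv(R^n;R): finite-valued convex functions on R^n. The topology on
  functions is the product (pointwise convergence) topology from Function_Topology.\<close>
definition Conv :: "(real^'n \<Rightarrow> real) set" where
  "Conv = {v. convex_on UNIV v}"

definition is_valuation :: "((real^'n \<Rightarrow> real) \<Rightarrow> real^'n) \<Rightarrow> bool" where
  "is_valuation z \<longleftrightarrow>
     (\<forall>v w. v \<in> Conv \<and> w \<in> Conv \<and> sup v w \<in> Conv \<and> inf v w \<in> Conv \<longrightarrow>
        z (sup v w) + z (inf v w) = z v + z w)"

definition dually_translation_covariant :: "((real^'n \<Rightarrow> real) \<Rightarrow> real^'n) \<Rightarrow> bool" where
  "dually_translation_covariant z \<longleftrightarrow>
     (\<exists>z0 :: (real^'n \<Rightarrow> real) \<Rightarrow> real. \<forall>v\<in>Conv. \<forall>x.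
        z (\<lambda>y. v y + x \<bullet> y) = z v + z0 v *\<^sub>R x)"

definition vertically_translation_invariant :: "((real^'n \<Rightarrow> real) \<Rightarrow> real^'n) \<Rightarrow> bool" where
  "vertically_translation_invariant z \<longleftrightarrow> (\<forall>v\<in>Conv. \<forall>c::real. z (\<lambda>y. v y + c) = z v)"

definition homogeneous_deg :: "real \<Rightarrow> ((real^'n \<Rightarrow> real) \<Rightarrow> real^'n) \<Rightarrow> bool" where
  "homogeneous_deg s z \<longleftrightarrow> (\<forall>v\<in>Conv. \<forall>r::real. r > 0 \<longrightarrow> z (\<lambda>y. r * v y) = r powr s *\<^sub>R z v)"

definition rotation_equivariant :: "((real^'n \<Rightarrow> real) \<Rightarrow> real^'n) \<Rightarrow> bool" where
  "rotation_equivariant z \<longleftrightarrow>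
     (\<forall>A :: real^'n^'n. orthogonal_matrix A \<and> det A = 1 \<longrightarrow>
        (\<forall>v\<in>Conv. z (\<lambda>x. v (matrix_inv A *v x)) = A *v z v))"

definition reflection_equivariant :: "((real^'n \<Rightarrow> real) \<Rightarrow> real^'n) \<Rightarrow> bool" where
  "reflection_equivariant z \<longleftrightarrow> (\<forall>v\<in>Conv. z (\<lambda>x. v (- x)) = - z v)"

end

theory Submission imports Defs begin
lemma lim0:
  fixes v :: "real^'n \<Rightarrow> real"
  shows "((\<lambda>k::nat. \<lambda>y. (1 / real (Suc k)) * v y) \<longlongrightarrow> (\<lambda>y. 0)) sequentially"
proof -
  have cw: "\<And>y. ((\<lambda>k::nat. (1 / real (Suc k)) * v y) \<longlongrightarrow> 0) sequentially"
    using tendsto_mult_left_zero[OF LIMSEQ_inverse_real_of_nat] by (simp add: divide_inverse)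
  then show ?thesis
  proof -
    have "limitin (product_topology (\<lambda>_. euclidean) UNIV) (\<lambda>k::nat. \<lambda>y. (1 / real (Suc k)) * v y) (\<lambda>y. 0) sequentially"
      unfolding limitin_componentwise using cw by simp
    then show ?thesis unfolding euclidean_product_topology limitin_canonical_iff .
  qed
qed
lemma diag_rot:
  fixes a b :: "'n::finite"
  assumes "a \<noteq> b"
  defines "A \<equiv> (\<chi> i j. if i = j then (if i = a \<or> i = b then -1 else 1) else 0) :: real^'n^'n"
  shows "orthogonal_matrix A" "det A = 1" "(A *v t) $ a = - t $ a"
proof -
  show "orthogonal_matrix A" unfolding orthogonal_matrix
    by (auto simp: vec_eq_iff matrix_matrix_mult_def A_def mat_def transpose_def if_distrib[of "\<lambda>x. x * _"] cong: if_cong)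
  have "det A = prod (\<lambda>i. A$i$i) UNIV" by (rule det_diagonal) (simp add: A_def)
  also have "\<dots> = prod (\<lambda>i. if i = a \<or> i = b then -1 else 1) UNIV" by (simp add: A_def)
  also have "\<dots> = 1"
  proof -
    have "prod (\<lambda>i. if i = a \<or> i = b then -1 else 1) UNIV = prod (\<lambda>i. -1::real) {a,b}"
      by (rule prod.mono_neutral_cong_right) auto
    then show ?thesis using assms by simp
  qed
  finally show "det A = 1" .
  show "(A *v t) $ a = - t $ a"
    by (simp add: matrix_vector_mult_def A_def if_distrib[of "\<lambda>x. x * _"] cong: if_cong)
qed

lemma conv_linear_comp:
  assumes "v \<in> Conv" "linear f"
  shows "(\<lambda>x. v (f x)) \<in> Conv"
  using assms unfolding Conv_def convex_on_def
  by (simp add: linear_add linear_scale)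

lemma const_of_props:
  fixes z :: "(real^'n \<Rightarrow> real) \<Rightarrow> real^'n"
  assumes c: "continuous_on Conv z" and h: "homogeneous_deg 0 z" and v: "v \<in> Conv"
  shows "z v = z (\<lambda>y. 0)"
proof -
  have z0: "(\<lambda>y. 0::real) \<in> Conv" by (simp add: Conv_def convex_on_const)
  have inC: "(\<lambda>y. (1 / real (Suc k)) * v y) \<in> Conv" for k
    using v unfolding Conv_def mem_Collect_eq by (intro convex_on_cmul) auto
  have "((\<lambda>k. z (\<lambda>y. (1 / real (Suc k)) * v y)) \<longlongrightarrow> z (\<lambda>y. 0)) sequentially"
    by (rule continuous_on_tendsto_compose[OF c lim0 z0]) (use inC in simp)
  moreover have "z (\<lambda>y. (1 / real (Suc k)) * v y) = z v" for k
  proof -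
    have "(1 / real (Suc k)) > 0" by simp
    then show ?thesis using h v unfolding homogeneous_deg_def by (metis powr_zero_eq_one less_irrefl scaleR_one)
  qed
  ultimately show ?thesis by (simp add: LIMSEQ_const_iff)
qed

theorem theorem5p4:
  fixes z :: "(real^'n \<Rightarrow> real) \<Rightarrow> real^'n"
  shows "((continuous_on Conv z \<and> dually_translation_covariant z \<and>
           vertically_translation_invariant z \<and> is_valuation z \<and> homogeneous_deg 0 z)
          \<longleftrightarrow> (\<exists>t. \<forall>v\<in>Conv. z v = t))
     \<and> ((continuous_on Conv z \<and> dually_translation_covariant z \<and>
           vertically_translation_invariant z \<and> is_valuation z \<and> homogeneous_deg 0 z)
          \<longrightarrow> (CARD('n) \<ge> 2 \<longrightarrow> (rotation_equivariant z \<longleftrightarrow> (\<forall>v\<in>Conv. z v = 0)))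
            \<and> (CARD('n) = 1 \<longrightarrow> (reflection_equivariant z \<longleftrightarrow> (\<forall>v\<in>Conv. z v = 0))))"
proof -
  have z0: "(\<lambda>y. 0::real) \<in> Conv" by (simp add: Conv_def convex_on_const)
  have lin: "(\<lambda>y. v y + x \<bullet> y) \<in> Conv" if "v \<in> Conv" for v and x :: "real^'n"
  proof -
    have "convex_on UNIV (\<lambda>y. x \<bullet> y)"
      unfolding convex_on_def by (simp add: inner_add_right)
    then show ?thesis using that unfolding Conv_def mem_Collect_eq by (intro convex_on_add) auto
  qed
  have vc: "(\<lambda>y. v y + c) \<in> Conv" if "v \<in> Conv" for v and c :: real
    using that unfolding Conv_def mem_Collect_eq by (intro convex_on_add) (auto simp: convex_on_def simp flip: distrib_right)
  have hc: "(\<lambda>y. r * v y) \<in> Conv" if "v \<in> Conv" "r > 0" for v r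
    using that unfolding Conv_def mem_Collect_eq by (intro convex_on_cmul) auto
  let ?P = "continuous_on Conv z \<and> dually_translation_covariant z \<and>
           vertically_translation_invariant z \<and> is_valuation z \<and> homogeneous_deg 0 z"
  have fwd: "\<forall>v\<in>Conv. z v = z (\<lambda>y. 0)" if ?P
    using that const_of_props by blast
  have bwd: ?P if "\<forall>v\<in>Conv. z v = t" for t
  proof -
    have "continuous_on Conv z"
      using continuous_on_cong[of Conv Conv z "\<lambda>_. t"] that by (simp add: continuous_on_const)
    moreover have "dually_translation_covariant z"
      unfolding dually_translation_covariant_def
      by (rule exI[of _ "\<lambda>_. 0"]) (simp add: that lin)
    moreover have "vertically_translation_invariant z"
      unfolding vertically_translation_invariant_def by (simp add: that vc)
    moreover have "is_valuation z" unfolding is_valuation_def using that by auto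
    moreover have "homogeneous_deg 0 z" unfolding homogeneous_deg_def using that hc by auto
    ultimately show ?thesis by blast
  qed
  have part1: "?P \<longleftrightarrow> (\<exists>t. \<forall>v\<in>Conv. z v = t)" using fwd bwd by blast
  have rot: "rotation_equivariant z \<longleftrightarrow> (\<forall>v\<in>Conv. z v = 0)" if ?P "CARD('n) \<ge> 2"
  proof
    assume r: "rotation_equivariant z"
    define t where "t = z (\<lambda>y. 0)"
    have tA: "A *v t = t" if "orthogonal_matrix A" "det A = 1" for A :: "real^'n^'n"
      using r that z0 unfolding rotation_equivariant_def t_def by force
    have "t = 0"
    proof (rule ccontr)
      assume "t \<noteq> 0"
      then obtain a where a: "t $ a \<noteq> 0" by (auto simp: vec_eq_iff)
      have "\<exists>b. b \<noteq> a"
      proof (rule ccontr)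
        assume "\<not> (\<exists>b. b \<noteq> a)"
        then have "(UNIV :: 'n set) = {a}" by auto
        then have "CARD('n) = card {a}" by (rule arg_cong)
        then have "CARD('n) = 1" by simp
        then show False using \<open>CARD('n) \<ge> 2\<close> by simp
      qed
      then obtain b where b: "a \<noteq> b" by metis
      define A where "A = ((\<chi> i j. if i = j then (if i = a \<or> i = b then -1 else 1) else 0) :: real^'n^'n)"
      have "A *v t = t" using tA diag_rot[OF b] unfolding A_def by blast
      then have "(A *v t) $ a = t $ a" by simp
      moreover have "(A *v t) $ a = - t $ a" unfolding A_def by (rule diag_rot(3)[OF b])
      ultimately show False using a by linarith
    qed
    then show "\<forall>v\<in>Conv. z v = 0" using fwd[OF \<open>?P\<close>] t_def by simp
  next
    assume "\<forall>v\<in>Conv. z v = 0"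
    then show "rotation_equivariant z" unfolding rotation_equivariant_def
      by (auto intro!: conv_linear_comp matrix_vector_mul_linear)
  qed
  have refl: "reflection_equivariant z \<longleftrightarrow> (\<forall>v\<in>Conv. z v = 0)" if ?P
  proof
    assume "reflection_equivariant z"
    then have "z (\<lambda>y. 0) = - z (\<lambda>y. 0)" using z0 unfolding reflection_equivariant_def by force
    then have "z (\<lambda>y. 0) + z (\<lambda>y. 0) = 0" by (metis add.right_inverse)
    then have "(2::real) *\<^sub>R z (\<lambda>y. 0) = 0" by (simp only: scaleR_2)
    then have "z (\<lambda>y. 0) = 0" by simp
    then show "\<forall>v\<in>Conv. z v = 0" using fwd[OF that] by simp
  next
    assume "\<forall>v\<in>Conv. z v = 0"
    moreover have "linear (\<lambda>x::real^'n. - x)" by (simp add: linear_uminus)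
    ultimately show "reflection_equivariant z" unfolding reflection_equivariant_def
      using conv_linear_comp by (metis neg_0_equal_iff_equal)
  qed
  show ?thesis using part1 rot refl by blast
qed

end
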